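(* Let $L\in\mathbb{R}^{m\times m}$ satisfy $\|\mathrm{e}^{\omega L}\|_\infty\le1$ for all $\omega>0$, and let $\rho>0$ and $f$ satisfy: there exists $\omega_0^+>0$ with $|\xi+\omega f(\xi)|\le\rho$ for all $\xi\in[-\rho,\rho]$, $\omega\in(0,\omega_0^+]$, and there exists $\omega_0^->0$ with $|\xi-\omega f(\xi)|\le\rho$ for all $\xi\in[-\rho,\rho]$, $\omega\in(0,\omega_0^-]$. Consider the classical fourth-order integrating factor Runge--Kutta scheme $$u^{(1)}=\mathrm{e}^{\frac{\tau}{2}L}u^n+\tfrac{\tau}{2}\mathrm{e}^{\frac{\tau}{2}L}f(u^n),\qquad u^{(2)}=\mathrm{e}^{\frac{\tau}{2}L}u^n+\tfrac{\tau}{2}f(u^{(1)}),$$ $$u^{(3)}=\mathrm{e}^{\tau L}u^n+\tau\,\mathrm{e}^{\frac{\tau}{2}L}f(u^{(2)}),$$ $$u^{n+1}=\mathrm{e}^{\tau L}u^n+\tau\Big(\tfrac16\mathrm{e}^{\tau L}f(u^n)+\tfrac13\mathrm{e}^{\frac{\tau}{2}L}f(u^{(1)})+\tfrac13\mathrm{e}^{\frac{\tau}{2}L}f(u^{(2)})+\tfrac16 f(u^{(3)})\Big).$$ If $\|u^n\|_\infty\le\rho$ and $0<\tau\le\frac23\min\{\omega_0^+,\omega_0^-\}$, then $\|u^{n+1}\|_\infty\le\rho$.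
   Context: $\|\cdot\|_\infty$ is the vector $\infty$-norm and induced matrix norm; $f(u)$ for a vector $u$ is applied componentwise. *)

theory Defs
  imports "HOL-Analysis.Analysis"
begin

primrec mpow :: "real^'n^'n \<Rightarrow> nat \<Rightarrow> real^'n^'n" where
  "mpow A 0 = mat 1"
| "mpow A (Suc k) = A ** mpow A k"

definition mexp :: "real^'n^'n \<Rightarrow> real^'n^'n" where
  "mexp A = (\<chi> i j. (\<Sum>k. (mpow A k) $ i $ j / fact k))"

definition inorm :: "real^'n \<Rightarrow> real" where
  "inorm x = Max (range (\<lambda>i. \<bar>x $ i\<bar>))"

definition mat_inorm :: "real^'n^'n \<Rightarrow> real" where
  "mat_inorm A = Sup {inorm (A *v x) | x. inorm x \<le> 1}"

definition cw :: "(real \<Rightarrow> real) \<Rightarrow> real^'n \<Rightarrow> real^'n" where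
  "cw f u = (\<chi> i. f (u $ i))"

end

theory Submission
  imports Defs
begin

lemma inorm_le_iff: "inorm x \<le> r \<longleftrightarrow> (\<forall>i. \<bar>x $ i\<bar> \<le> r)"
  unfolding inorm_def by (subst Max_le_iff) auto

lemma abs_le_inorm: "\<bar>x $ i\<bar> \<le> inorm x"
  unfolding inorm_def by (rule Max_ge) auto

lemma inorm_add: "inorm (x + y) \<le> inorm x + inorm y"
  unfolding inorm_le_iff
  by (metis abs_le_inorm abs_triangle_ineq add_mono order_trans vector_add_component)

lemma inorm_scaleR: "inorm (c *\<^sub>R x) = \<bar>c\<bar> * inorm x"
proof (rule antisym)
  show "inorm (c *\<^sub>R x) \<le> \<bar>c\<bar> * inorm x" unfolding inorm_le_iff
    by (simp add: abs_mult abs_le_inorm mult_left_mono)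
  have "inorm x \<in> range (\<lambda>i. \<bar>x $ i\<bar>)" unfolding inorm_def
    by (rule Max_in) auto
  then obtain i where "inorm x = \<bar>x $ i\<bar>" by auto
  then show "\<bar>c\<bar> * inorm x \<le> inorm (c *\<^sub>R x)"
    using abs_le_inorm[of "c *\<^sub>R x" i] by (simp add: abs_mult)
qed

lemma inorm_nonneg: "0 \<le> inorm x"
  using abs_le_inorm[of x] abs_ge_zero order_trans by blast

lemma inorm_zero: "inorm (0::real^'n) = 0"
  using inorm_le_iff[of "0::real^'n" 0] inorm_nonneg[of "0::real^'n"] by simp

lemma mat_bound: "inorm (A *v x) \<le> (\<Sum>i\<in>UNIV. \<Sum>j\<in>UNIV. \<bar>A$i$j\<bar>) * inorm x"
  unfolding inorm_le_iff
proof
  fix i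
  have "\<bar>(A *v x) $ i\<bar> = \<bar>\<Sum>j\<in>UNIV. A$i$j * x$j\<bar>" by (simp add: matrix_vector_mult_def)
  also have "\<dots> \<le> (\<Sum>j\<in>UNIV. \<bar>A$i$j\<bar> * inorm x)"
    by (rule order_trans[OF sum_abs]) (auto intro!: sum_mono simp: abs_mult abs_le_inorm mult_left_mono)
  also have "\<dots> = (\<Sum>j\<in>UNIV. \<bar>A$i$j\<bar>) * inorm x" by (simp add: sum_distrib_right)
  also have "\<dots> \<le> (\<Sum>i\<in>UNIV. \<Sum>j\<in>UNIV. \<bar>A$i$j\<bar>) * inorm x"
    apply (rule mult_right_mono[OF _ inorm_nonneg])
    apply (rule member_le_sum[where f="\<lambda>i. \<Sum>j\<in>UNIV. \<bar>A$i$j\<bar>"])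
    apply (auto intro: sum_nonneg)
    done
  finally show "\<bar>(A *v x) $ i\<bar> \<le> (\<Sum>i\<in>UNIV. \<Sum>j\<in>UNIV. \<bar>A$i$j\<bar>) * inorm x" .
qed

lemma nonexp:
  assumes "mat_inorm A \<le> 1"
  shows "inorm (A *v x) \<le> inorm x"
proof (cases "inorm x = 0")
  case True
  then have "x = 0" using abs_le_inorm[of x] by (simp add: vec_eq_iff)
  then show ?thesis by (simp add: inorm_zero)
next
  case False
  then have p: "inorm x > 0" using inorm_nonneg[of x] by simp
  define y where "y = (1 / inorm x) *\<^sub>R x"
  have y1: "inorm y \<le> 1" using p by (simp add: y_def inorm_scaleR)
  have bdd: "bdd_above {inorm (A *v x) | x. inorm x \<le> 1}"
    unfolding bdd_above_def
    apply (rule exI[of _ "(\<Sum>i\<in>UNIV. \<Sum>j\<in>UNIV. \<bar>A$i$j\<bar>)"])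
    apply clarify
    apply (rule order_trans[OF mat_bound])
    apply (rule mult_left_le)
     apply assumption
    apply (auto intro!: sum_nonneg)
    done
  have "inorm (A *v y) \<le> mat_inorm A"
    unfolding mat_inorm_def by (rule cSup_upper[OF _ bdd]) (use y1 in blast)
  also have "\<dots> \<le> 1" by fact
  finally have "inorm (A *v y) \<le> 1" .
  moreover have "A *v y = (1 / inorm x) *\<^sub>R (A *v x)" by (simp add: y_def matrix_vector_mult_scaleR)
  ultimately have "(1 / inorm x) * inorm (A *v x) \<le> 1" using p by (simp add: inorm_scaleR)
  then show ?thesis using p by (simp add: field_simps)
qed

lemma euler_p:
  assumes "inorm v \<le> \<rho>" "0 \<le> \<omega>" "\<omega> \<le> \<omega>p"
    "\<forall>\<xi>\<in>{-\<rho>..\<rho>}. \<forall>\<omega>\<in>{0<..\<omega>p}. \<bar>\<xi> + \<omega> * f \<xi>\<bar> \<le> \<rho>"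
  shows "inorm (v + \<omega> *\<^sub>R cw f v) \<le> \<rho>"
  unfolding inorm_le_iff
proof
  fix i
  have vi: "v $ i \<in> {-\<rho>..\<rho>}" using assms(1) abs_le_inorm[of v i] by auto
  show "\<bar>(v + \<omega> *\<^sub>R cw f v) $ i\<bar> \<le> \<rho>"
  proof (cases "\<omega> = 0")
    case True then show ?thesis using vi by auto
  next
    case False then show ?thesis using assms vi by (auto simp: cw_def)
  qed
qed

lemma euler_m:
  assumes "inorm v \<le> \<rho>" "0 \<le> \<omega>" "\<omega> \<le> \<omega>m"
    "\<forall>\<xi>\<in>{-\<rho>..\<rho>}. \<forall>\<omega>\<in>{0<..\<omega>m}. \<bar>\<xi> - \<omega> * f \<xi>\<bar> \<le> \<rho>"
  shows "inorm (v - \<omega> *\<^sub>R cw f v) \<le> \<rho>"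
  unfolding inorm_le_iff
proof
  fix i
  have vi: "v $ i \<in> {-\<rho>..\<rho>}" using assms(1) abs_le_inorm[of v i] by auto
  show "\<bar>(v - \<omega> *\<^sub>R cw f v) $ i\<bar> \<le> \<rho>"
  proof (cases "\<omega> = 0")
    case True then show ?thesis using vi by auto
  next
    case False then show ?thesis using assms vi by (auto simp: cw_def)
  qed
qed

lemma mmult_scaleR: "(c *\<^sub>R A) ** (d *\<^sub>R B) = (c*d) *\<^sub>R (A ** B :: real^'n^'n)"
  by (simp add: vec_eq_iff matrix_matrix_mult_def sum_distrib_left algebra_simps)

lemma mpow_scale: "mpow (c *\<^sub>R A) k = c^k *\<^sub>R mpow A k"
proof (induction k)
  case 0 then show ?case by simp
next
  case (Suc k)
  have "mpow (c *\<^sub>R A) (Suc k) = (c *\<^sub>R A) ** (c^k *\<^sub>R mpow A k)" by (simp add: Suc)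
  also have "\<dots> = c^Suc k *\<^sub>R mpow A (Suc k)" by (simp add: mmult_scaleR)
  finally show ?case .
qed

lemma mpow_add: "mpow A i ** mpow A j = mpow A (i+j)"
  by (induction i) (simp_all add: matrix_mul_lid, metis matrix_mul_assoc)

lemma mpow_bound:
  fixes A :: "real^'n^'n"
  shows "\<bar>mpow A k $ i $ j\<bar> \<le> (\<Sum>i\<in>UNIV. \<Sum>j\<in>UNIV. \<bar>A$i$j\<bar>) ^ k"
proof (induction k arbitrary: i j)
  case 0 then show ?case by (simp add: mat_def)
next
  case (Suc k)
  let ?C = "(\<Sum>i\<in>UNIV. \<Sum>j\<in>UNIV. \<bar>A$i$j\<bar>)"
  have "\<bar>mpow A (Suc k) $ i $ j\<bar> = \<bar>\<Sum>l\<in>UNIV. A$i$l * mpow A k $ l $ j\<bar>"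
    by (simp add: matrix_matrix_mult_def)
  also have "\<dots> \<le> (\<Sum>l\<in>UNIV. \<bar>A$i$l\<bar> * ?C^k)"
    by (rule order_trans[OF sum_abs]) (auto intro!: sum_mono simp: abs_mult Suc mult_left_mono)
  also have "\<dots> = (\<Sum>l\<in>UNIV. \<bar>A$i$l\<bar>) * ?C^k" by (simp add: sum_distrib_right)
  also have "\<dots> \<le> ?C * ?C^k"
    apply (rule mult_right_mono)
    apply (rule member_le_sum[where f="\<lambda>i. \<Sum>j\<in>UNIV. \<bar>A$i$j\<bar>"])
    apply (auto intro: sum_nonneg zero_le_power)
    done
  finally show ?case by simp
qed

lemma mexp_scale_entry: "mexp (a *\<^sub>R A) $ i $ j = (\<Sum>k. a^k / fact k * mpow A k $ i $ j)"
  by (simp add: mexp_def mpow_scale)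

lemma summable_entry:
  fixes A :: "real^'n^'n"
  shows "summable (\<lambda>k. norm (a^k / fact k * mpow A k $ i $ j))"
proof -
  let ?C = "(\<Sum>i\<in>UNIV. \<Sum>j\<in>UNIV. \<bar>A$i$j\<bar>)"
  have s: "summable (\<lambda>k. inverse (fact k) * (\<bar>a\<bar> * ?C)^k)" by (rule summable_exp)
  show ?thesis
  proof (rule summable_comparison_test'[OF s, where N=0])
    fix k :: nat
    assume "0 \<le> k"
    have "norm (a^k / fact k * mpow A k $ i $ j) = \<bar>a\<bar>^k / fact k * \<bar>mpow A k $ i $ j\<bar>"
      by (simp add: abs_mult power_abs)
    also have "\<dots> \<le> \<bar>a\<bar>^k / fact k * ?C^k"
      by (rule mult_left_mono[OF mpow_bound]) simp
    also have "\<dots> = inverse (fact k) * (\<bar>a\<bar> * ?C)^k" by (simp add: power_mult_distrib field_simps)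
    finally show "norm (norm (a^k / fact k * mpow A k $ i $ j)) \<le> inverse (fact k) * (\<bar>a\<bar> * ?C)^k" by simp
  qed
qed

lemma mexp_add:
  fixes A :: "real^'n^'n"
  shows "mexp (a *\<^sub>R A) ** mexp (b *\<^sub>R A) = mexp ((a+b) *\<^sub>R A)"
proof -
  { fix i j
    define \<alpha> where "\<alpha> = (\<lambda>l k. a^k / fact k * mpow A k $ i $ l)"
    define \<beta> where "\<beta> = (\<lambda>l k. b^k / fact k * mpow A k $ l $ j)"
    have "(mexp (a *\<^sub>R A) ** mexp (b *\<^sub>R A)) $ i $ j = (\<Sum>l\<in>UNIV. (\<Sum>k. \<alpha> l k) * (\<Sum>k. \<beta> l k))"
      by (simp add: matrix_matrix_mult_def mexp_scale_entry \<alpha>_def \<beta>_def)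
    also have "\<dots> = (\<Sum>l\<in>UNIV. \<Sum>n. \<Sum>p\<le>n. \<alpha> l p * \<beta> l (n - p))"
      by (intro sum.cong refl Cauchy_product) (simp_all only: \<alpha>_def \<beta>_def summable_entry)
    also have "\<dots> = (\<Sum>n. \<Sum>l\<in>UNIV. \<Sum>p\<le>n. \<alpha> l p * \<beta> l (n - p))"
    proof (rule suminf_sum[symmetric])
      fix l :: 'n
      show "summable (\<lambda>n. \<Sum>p\<le>n. \<alpha> l p * \<beta> l (n - p))"
        by (rule summable_Cauchy_product) (simp_all only: \<alpha>_def \<beta>_def summable_entry)
    qed
    also have "\<dots> = (\<Sum>n. (a+b)^n / fact n * mpow A n $ i $ j)"
    proof (rule arg_cong[where f=suminf], rule ext)
      fix n
      have "(\<Sum>l\<in>UNIV. \<Sum>p\<le>n. \<alpha> l p * \<beta> l (n - p))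
          = (\<Sum>p\<le>n. a^p / fact p * (b^(n-p) / fact (n-p)) * (\<Sum>l\<in>UNIV. mpow A p $ i $ l * mpow A (n-p) $ l $ j))"
        by (subst sum.swap) (simp add: \<alpha>_def \<beta>_def sum_distrib_left algebra_simps)
      also have "\<dots> = (\<Sum>p\<le>n. of_nat (n choose p) * a^p * b^(n-p) / fact n * mpow A n $ i $ j)"
      proof (rule sum.cong[OF refl])
        fix p assume "p \<in> {..n}"
        then have pn: "p \<le> n" by simp
        have "(\<Sum>l\<in>UNIV. mpow A p $ i $ l * mpow A (n-p) $ l $ j) = mpow A n $ i $ j"
          using mpow_add[of A p "n-p"] pn by (simp add: matrix_matrix_mult_def vec_eq_iff)
        moreover have "(of_nat (n choose p) :: real) = fact n / (fact p * fact (n - p))"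
          by (rule binomial_fact[OF pn])
        ultimately show "a^p / fact p * (b^(n-p) / fact (n-p)) * (\<Sum>l\<in>UNIV. mpow A p $ i $ l * mpow A (n-p) $ l $ j)
            = of_nat (n choose p) * a^p * b^(n-p) / fact n * mpow A n $ i $ j"
          by (simp add: field_simps)
      qed
      also have "\<dots> = (a+b)^n / fact n * mpow A n $ i $ j"
        by (simp add: binomial_ring[of a b n] sum_divide_distrib sum_distrib_right)
      finally show "(\<Sum>l\<in>UNIV. \<Sum>p\<le>n. \<alpha> l p * \<beta> l (n - p)) = (a+b)^n / fact n * mpow A n $ i $ j" .
    qed
    also have "\<dots> = mexp ((a+b) *\<^sub>R A) $ i $ j" by (simp add: mexp_scale_entry)
    finally have "(mexp (a *\<^sub>R A) ** mexp (b *\<^sub>R A)) $ i $ j = mexp ((a+b) *\<^sub>R A) $ i $ j" .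
  }
  then show ?thesis by (simp add: vec_eq_iff)
qed

lemma lin:
  fixes Xa Xb Xc Xd Xe Ua Va Vb :: "'a::real_vector" and t :: real
  assumes "Ua = Xa + t *\<^sub>R Xd" "Vb = Xa + (t/2) *\<^sub>R Xc" "Va = Xa + (t/2) *\<^sub>R Xb"
  shows "Xa + t *\<^sub>R ((1/6)*\<^sub>R Xb + (1/3)*\<^sub>R Xc + (1/3)*\<^sub>R Xd + (1/6)*\<^sub>R Xe)
    = (1/3)*\<^sub>R (Ua + (t/2)*\<^sub>R Xe) + ((1/3)*\<^sub>R Vb + (1/3)*\<^sub>R (Va + (t/2)*\<^sub>R Xc))"
  unfolding assms by (simp add: algebra_simps scaleR_add_left[symmetric])

theorem mainTheorem6:
  fixes L :: "real^'m^'m" and f :: "real \<Rightarrow> real"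
    and \<rho> \<omega>p \<omega>m \<tau> :: real and un :: "real^'m"
  assumes hL: "\<forall>\<omega>>0. mat_inorm (mexp (\<omega> *\<^sub>R L)) \<le> 1"
    and h\<rho>: "\<rho> > 0"
    and h\<omega>p: "\<omega>p > 0" "\<forall>\<xi>\<in>{-\<rho>..\<rho>}. \<forall>\<omega>\<in>{0<..\<omega>p}. \<bar>\<xi> + \<omega> * f \<xi>\<bar> \<le> \<rho>"
    and h\<omega>m: "\<omega>m > 0" "\<forall>\<xi>\<in>{-\<rho>..\<rho>}. \<forall>\<omega>\<in>{0<..\<omega>m}. \<bar>\<xi> - \<omega> * f \<xi>\<bar> \<le> \<rho>"
    and hu: "inorm un \<le> \<rho>"
    and h\<tau>: "0 < \<tau>" "\<tau> \<le> 2/3 * min \<omega>p \<omega>m"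
  shows "let E2 = mexp ((\<tau>/2) *\<^sub>R L); E1 = mexp (\<tau> *\<^sub>R L);
             u1 = E2 *v un + (\<tau>/2) *\<^sub>R (E2 *v cw f un);
             u2 = E2 *v un + (\<tau>/2) *\<^sub>R cw f u1;
             u3 = E1 *v un + \<tau> *\<^sub>R (E2 *v cw f u2);
             unew = E1 *v un + \<tau> *\<^sub>R ((1/6) *\<^sub>R (E1 *v cw f un) + (1/3) *\<^sub>R (E2 *v cw f u1)
                      + (1/3) *\<^sub>R (E2 *v cw f u2) + (1/6) *\<^sub>R cw f u3)
         in inorm unew \<le> \<rho>"
proof -
  define E where "E = mexp ((\<tau>/2) *\<^sub>R L)"
  have E1: "mexp (\<tau> *\<^sub>R L) = E ** E" using mexp_add[of "\<tau>/2" L "\<tau>/2"] by (simp add: E_def)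
  have nE: "\<And>x. inorm (E *v x) \<le> inorm x" unfolding E_def
    by (rule nonexp) (use hL h\<tau> in auto)
  define F :: "real^'m \<Rightarrow> real^'m" where "F = cw f"
  define u1 where "u1 = E *v un + (\<tau>/2) *\<^sub>R (E *v F un)"
  define u2 where "u2 = E *v un + (\<tau>/2) *\<^sub>R F u1"
  define u3 where "u3 = (E ** E) *v un + \<tau> *\<^sub>R (E *v F u2)"
  define unew where "unew = (E ** E) *v un + \<tau> *\<^sub>R ((1/6) *\<^sub>R ((E ** E) *v F un) + (1/3) *\<^sub>R (E *v F u1)
                      + (1/3) *\<^sub>R (E *v F u2) + (1/6) *\<^sub>R F u3)"
  have bp: "3*\<tau>/2 \<le> \<omega>p" and bm: "3*\<tau>/2 \<le> \<omega>m" using h\<tau> by auto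
  have EP: "\<And>v \<omega>. inorm v \<le> \<rho> \<Longrightarrow> 0 \<le> \<omega> \<Longrightarrow> \<omega> \<le> 3*\<tau>/2 \<Longrightarrow> inorm (v + \<omega> *\<^sub>R F v) \<le> \<rho>"
    unfolding F_def using euler_p[OF _ _ _ h\<omega>p(2)] bp by (meson order_trans)
  have EM: "\<And>v \<omega>. inorm v \<le> \<rho> \<Longrightarrow> 0 \<le> \<omega> \<Longrightarrow> \<omega> \<le> 3*\<tau>/2 \<Longrightarrow> inorm (v - \<omega> *\<^sub>R F v) \<le> \<rho>"
    unfolding F_def using euler_m[OF _ _ _ h\<omega>m(2)] bm by (meson order_trans)
  have tri: "\<And>(x::real^'m) y a b. 0 \<le> a \<Longrightarrow> 0 \<le> b \<Longrightarrow> inorm x \<le> \<rho> \<Longrightarrow> inorm y \<le> \<rho> \<Longrightarrow>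
      inorm (a *\<^sub>R x + b *\<^sub>R y) \<le> a * \<rho> + b * \<rho>"
  proof -
    fix x y :: "real^'m" and a b :: real
    assume "0 \<le> a" "0 \<le> b" "inorm x \<le> \<rho>" "inorm y \<le> \<rho>"
    then show "inorm (a *\<^sub>R x + b *\<^sub>R y) \<le> a * \<rho> + b * \<rho>"
      using inorm_add[of "a *\<^sub>R x" "b *\<^sub>R y"]
      by (simp add: inorm_scaleR) (smt (verit) mult_left_mono)
  qed
  have i1: "u1 = E *v (un + (\<tau>/2) *\<^sub>R F un)" by (simp add: u1_def algebra_simps)
  have n1: "inorm u1 \<le> \<rho>" unfolding i1
    using nE EP[OF hu, of "\<tau>/2"] h\<tau> order_trans by fastforce
  have i2: "u2 = (1/2) *\<^sub>R (E *v (un - (\<tau>/2) *\<^sub>R F un)) + (1/2) *\<^sub>R (u1 + \<tau> *\<^sub>R F u1)"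
    by ((simp add: u2_def u1_def algebra_simps); (simp add: vec_eq_iff algebra_simps)?)
  have n2: "inorm u2 \<le> \<rho>"
  proof -
    have "inorm (E *v (un - (\<tau>/2) *\<^sub>R F un)) \<le> \<rho>"
      using nE EM[OF hu, of "\<tau>/2"] h\<tau> order_trans by fastforce
    moreover have "inorm (u1 + \<tau> *\<^sub>R F u1) \<le> \<rho>" using EP[OF n1, of \<tau>] h\<tau> by auto
    ultimately show ?thesis unfolding i2 using tri[of "1/2" "1/2"] by fastforce
  qed
  define w where "w = E *v un + \<tau> *\<^sub>R F u2"
  have iw: "w = (2/3) *\<^sub>R (u2 + (3*\<tau>/2) *\<^sub>R F u2) + ((1/4) *\<^sub>R (u1 - (4*\<tau>/3) *\<^sub>R F u1)
      + (1/12) *\<^sub>R (E *v (un - (3*\<tau>/2) *\<^sub>R F un)))"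
    by ((simp add: w_def u2_def u1_def algebra_simps); (simp add: vec_eq_iff algebra_simps)?)
  have nw: "inorm w \<le> \<rho>"
  proof -
    have a: "inorm (u2 + (3*\<tau>/2) *\<^sub>R F u2) \<le> \<rho>" using EP[OF n2, of "3*\<tau>/2"] h\<tau> by auto
    have b: "inorm (u1 - (4*\<tau>/3) *\<^sub>R F u1) \<le> \<rho>" using EM[OF n1, of "4*\<tau>/3"] h\<tau> by auto
    have c: "inorm (E *v (un - (3*\<tau>/2) *\<^sub>R F un)) \<le> \<rho>"
      using nE EM[OF hu, of "3*\<tau>/2"] h\<tau> order_trans by fastforce
    have bc: "inorm ((1/4) *\<^sub>R (u1 - (4*\<tau>/3) *\<^sub>R F u1)
      + (1/12) *\<^sub>R (E *v (un - (3*\<tau>/2) *\<^sub>R F un))) \<le> (1/3) * \<rho>"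
      using tri[OF _ _ b c, of "1/4" "1/12"] by simp
    have "inorm w \<le> inorm ((2/3) *\<^sub>R (u2 + (3*\<tau>/2) *\<^sub>R F u2)) + (1/3) * \<rho>"
      unfolding iw using inorm_add bc by (meson add_left_mono order_trans)
    also have "\<dots> \<le> (2/3) * \<rho> + (1/3) * \<rho>" using a by (simp add: inorm_scaleR)
    finally show ?thesis by simp
  qed
  have i3: "u3 = E *v w" by ((simp add: u3_def w_def algebra_simps matrix_vector_mul_assoc); (simp add: vec_eq_iff algebra_simps)?)
  have n3: "inorm u3 \<le> \<rho>" unfolding i3 using nE nw order_trans by blast
  have e1: "E *v u1 = (E ** E) *v un + (\<tau>/2) *\<^sub>R ((E ** E) *v F un)"
    by (simp only: u1_def matrix_vector_right_distrib matrix_vector_mult_scaleR matrix_vector_mul_assoc)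
  have e2: "E *v u2 = (E ** E) *v un + (\<tau>/2) *\<^sub>R (E *v F u1)"
    by (simp only: u2_def matrix_vector_right_distrib matrix_vector_mult_scaleR matrix_vector_mul_assoc)
  have ee: "E *v ((1/3) *\<^sub>R u2 + (1/3) *\<^sub>R (u1 + (\<tau>/2) *\<^sub>R F u1))
      = (1/3) *\<^sub>R (E *v u2) + (1/3) *\<^sub>R (E *v u1 + (\<tau>/2) *\<^sub>R (E *v F u1))"
    by (simp only: matrix_vector_right_distrib matrix_vector_mult_scaleR)
  have inew: "unew = (1/3) *\<^sub>R (u3 + (\<tau>/2) *\<^sub>R F u3) + E *v ((1/3) *\<^sub>R u2 + (1/3) *\<^sub>R (u1 + (\<tau>/2) *\<^sub>R F u1))"
    unfolding ee unfolding unew_def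
    by (rule lin[where Xe="F u3", OF u3_def e2 e1])
  have main: "inorm unew \<le> \<rho>"
  proof -
    have a: "inorm (u3 + (\<tau>/2) *\<^sub>R F u3) \<le> \<rho>" using EP[OF n3, of "\<tau>/2"] h\<tau> by auto
    have b: "inorm (u1 + (\<tau>/2) *\<^sub>R F u1) \<le> \<rho>" using EP[OF n1, of "\<tau>/2"] h\<tau> by auto
    have c0: "inorm ((1/3) *\<^sub>R u2 + (1/3) *\<^sub>R (u1 + (\<tau>/2) *\<^sub>R F u1)) \<le> (2/3) * \<rho>"
      using tri[OF _ _ n2 b, of "1/3" "1/3"] by simp
    have c: "inorm (E *v ((1/3) *\<^sub>R u2 + (1/3) *\<^sub>R (u1 + (\<tau>/2) *\<^sub>R F u1))) \<le> (2/3) * \<rho>"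
      by (rule order_trans[OF nE c0])
    have "inorm unew \<le> inorm ((1/3) *\<^sub>R (u3 + (\<tau>/2) *\<^sub>R F u3)) + (2/3) * \<rho>"
      unfolding inew using inorm_add c by (meson add_left_mono order_trans)
    also have "\<dots> \<le> (1/3) * \<rho> + (2/3) * \<rho>" using a by (simp add: inorm_scaleR)
    finally show ?thesis by simp
  qed
  show ?thesis
    unfolding Let_def E1 E_def[symmetric] F_def[symmetric]
    unfolding u1_def[symmetric] u2_def[symmetric] u3_def[symmetric] unew_def[symmetric]
    by (rule main)
qed

end
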